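(* Let $p$ be a prime number and let $1\to F\to H\to\bar H\to1$ be an exact sequence of finite groups such that $\bar H$ is abelian and generated by $r$ elements. Suppose that $|F|\le B\cdot|F_p|^e$ for some positive constants $B$ and $e$, where $F_p$ is a $p$-Sylow subgroup of $F$, and that $F$ is generated by $s$ elements. Then $H$ contains a characteristic abelian subgroup of order coprime to $p$ and index at most $B^{r+s}\cdot|H_p|^{e(r+s)+1}$, where $H_p$ is a $p$-Sylow subgroup of $H$. *)

theory Defs
  imports "HOL-Algebra.Algebra" "HOL-Computational_Algebra.Primes"
begin

definition generated_by_at_most :: "('a, 'b) monoid_scheme \<Rightarrow> nat \<Rightarrow> bool" where
  "generated_by_at_most G n \<longleftrightarrow>
     (\<exists>S. S \<subseteq> carrier G \<and> finite S \<and> card S \<le> n \<and> generate G S = carrier G)"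

definition sylow_subgroup :: "nat \<Rightarrow> ('a, 'b) monoid_scheme \<Rightarrow> 'a set \<Rightarrow> bool" where
  "sylow_subgroup p G P \<longleftrightarrow>
     subgroup P G \<and> card P = p ^ multiplicity p (order G)"

definition characteristic_subgroup :: "'a set \<Rightarrow> ('a, 'b) monoid_scheme \<Rightarrow> bool" where
  "characteristic_subgroup A G \<longleftrightarrow>
     subgroup A G \<and> (\<forall>\<phi> \<in> iso G G. \<phi> ` A = A)"

end

theory Submission
  imports Defs
begin


lemma cauchy_like:
  fixes G :: "('a,'b) monoid_scheme" (structure)
  assumes G: "group G" and fin: "finite (carrier G)" and q: "Factorial_Ring.prime (q::nat)"
    and dv: "q dvd order G" and all: "\<And>x. x \<in> carrier G \<Longrightarrow> x [^]\<^bsub>G\<^esub> n = \<one>\<^bsub>G\<^esub>"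
  shows "q dvd n"
proof -
  interpret group G by fact
  obtain m where m: "order G = q ^ 1 * m" using dv by auto
  obtain Q where Q: "subgroup Q G" "card Q = q"
    using sylow_thm[OF q G m fin] by auto
  have q2: "q \<ge> 2" using q prime_ge_2_nat by blast
  have "Q \<noteq> {\<one>}" using Q q2 by auto
  moreover have "\<one> \<in> Q" using Q subgroup.one_closed by blast
  ultimately obtain x where x: "x \<in> Q" "x \<noteq> \<one>" by blast
  interpret Q: group "G\<lparr>carrier := Q\<rparr>" using subgroup_imp_group[OF Q(1)] .
  have "Q.ord x dvd order (G\<lparr>carrier := Q\<rparr>)"
    using Q.ord_dvd_group_order[of x] x by simp
  hence d: "Q.ord x dvd q" using Q by (simp add: order_def)
  have "Q.ord x \<noteq> 1" using Q.ord_eq_1[of x] x by simp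
  hence o: "Q.ord x = q" using d q by (meson prime_nat_iff)
  have "x [^]\<^bsub>G\<lparr>carrier := Q\<rparr>\<^esub> n = \<one>\<^bsub>G\<lparr>carrier := Q\<rparr>\<^esub>"
    using all[of x] x Q subgroup.subset nat_pow_consistent by (metis in_mono monoid.select_convs(2) partial_object.simps(3) partial_object.update_convs(1) monoid.surjective)
  then show ?thesis using Q.pow_eq_id[of x n] x o by simp
qed

lemma fiber_card:
  fixes G :: "('a,'b) monoid_scheme" (structure)
  assumes G: "group G" and S: "S \<subseteq> carrier G" and K: "finite K"
    and f: "\<And>x y. x \<in> S \<Longrightarrow> y \<in> S \<Longrightarrow> f x = f y \<Longrightarrow> inv x \<otimes> y \<in> K"
  shows "card S \<le> card (f ` S) * card K"
proof (cases "finite S")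
  case False then show ?thesis by simp
next
  case True
  interpret group G by fact
  define rep where "rep v = (SOME y. y \<in> S \<and> f y = v)" for v
  have rep: "rep (f x) \<in> S \<and> f (rep (f x)) = f x" if "x \<in> S" for x
    unfolding rep_def by (rule someI[of _ x]) (use that in auto)
  define psi where "psi x = (f x, inv (rep (f x)) \<otimes> x)" for x
  have "inj_on psi S"
  proof (rule inj_onI)
    fix x y assume xy: "x \<in> S" "y \<in> S" "psi x = psi y"
    hence e1: "f x = f y" and e2: "inv (rep (f x)) \<otimes> x = inv (rep (f y)) \<otimes> y"
      unfolding psi_def by auto
    have r: "rep (f x) \<in> carrier G" using rep[OF xy(1)] S by auto
    from e2 e1 have "inv (rep (f x)) \<otimes> x = inv (rep (f x)) \<otimes> y" by simp
    then show "x = y" using r xy S by (meson inv_closed l_cancel subsetD)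
  qed
  moreover have "psi ` S \<subseteq> f ` S \<times> K"
    unfolding psi_def using rep f by auto
  ultimately have "card S \<le> card (f ` S \<times> K)"
    using card_inj_on_le True K by blast
  then show ?thesis by (simp add: card_cartesian_product)
qed

lemma centralizer_subgroup:
  fixes G :: "('a,'b) monoid_scheme" (structure)
  assumes G: "group G" and c: "c \<in> carrier G"
  shows "subgroup {g \<in> carrier G. c \<otimes> g = g \<otimes> c} G"
proof -
  interpret group G by fact
  show ?thesis
  proof (rule subgroup.intro)
    fix x y assume x: "x \<in> {g \<in> carrier G. c \<otimes> g = g \<otimes> c}" and y: "y \<in> {g \<in> carrier G. c \<otimes> g = g \<otimes> c}"
    then have xs: "x \<in> carrier G" "y \<in> carrier G" "c \<otimes> x = x \<otimes> c" "c \<otimes> y = y \<otimes> c" by auto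
    have "c \<otimes> (x \<otimes> y) = (c \<otimes> x) \<otimes> y" using xs(1,2) c by (simp add: m_assoc)
    also have "\<dots> = (x \<otimes> c) \<otimes> y" using xs(3) by simp
    also have "\<dots> = x \<otimes> (c \<otimes> y)" using xs(1,2) c by (simp add: m_assoc)
    also have "\<dots> = x \<otimes> (y \<otimes> c)" using xs(4) by simp
    also have "\<dots> = x \<otimes> y \<otimes> c" using xs(1,2) c by (simp add: m_assoc)
    finally show "x \<otimes> y \<in> {g \<in> carrier G. c \<otimes> g = g \<otimes> c}" using xs by simp
  next
    fix x assume x: "x \<in> {g \<in> carrier G. c \<otimes> g = g \<otimes> c}"
    then have xc: "x \<in> carrier G" "c \<otimes> x = x \<otimes> c" by auto
    have "c \<otimes> inv x = inv x \<otimes> (x \<otimes> c) \<otimes> inv x" using xc(1) c by (simp add: m_assoc[symmetric])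
    also have "\<dots> = inv x \<otimes> (c \<otimes> x) \<otimes> inv x" using xc(2) by simp
    also have "\<dots> = inv x \<otimes> c" using xc(1) c by (simp add: m_assoc)
    finally show "inv x \<in> {g \<in> carrier G. c \<otimes> g = g \<otimes> c}" using xc by simp
  qed (use c in auto)
qed

lemma center_pow_subgroup:
  fixes G :: "('a,'b) monoid_scheme" (structure)
  assumes G: "group G"
  shows "subgroup {z \<in> carrier G. (\<forall>g\<in>carrier G. z \<otimes> g = g \<otimes> z) \<and> z [^] (n::nat) = \<one>} G"
proof -
  interpret group G by fact
  define Z where "Z = {z \<in> carrier G. (\<forall>g\<in>carrier G. z \<otimes> g = g \<otimes> z) \<and> z [^] (n::nat) = \<one>}"
  have "subgroup Z G"
  proof (rule subgroup.intro)
    show "Z \<subseteq> carrier G" unfolding Z_def by blast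
  next
    show "\<one> \<in> Z" unfolding Z_def by simp
  next
    fix x y assume x: "x \<in> Z" and y: "y \<in> Z"
    have xc: "x \<in> carrier G" "y \<in> carrier G" "x [^] n = \<one>" "y [^] n = \<one>"
      using x y unfolding Z_def by blast+
    have xyc: "x \<otimes> y = y \<otimes> x" using x y unfolding Z_def by blast
    have c: "x \<otimes> y \<otimes> g = g \<otimes> (x \<otimes> y)" if "g \<in> carrier G" for g
    proof -
      have xs: "x \<otimes> g = g \<otimes> x" "y \<otimes> g = g \<otimes> y" using x y that unfolding Z_def by blast+
      have "x \<otimes> y \<otimes> g = x \<otimes> (y \<otimes> g)" using xc(1,2) that by (simp add: m_assoc)
      also have "\<dots> = x \<otimes> (g \<otimes> y)" using xs(2) by simp
      also have "\<dots> = (x \<otimes> g) \<otimes> y" using xc(1,2) that by (simp add: m_assoc)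
      also have "\<dots> = (g \<otimes> x) \<otimes> y" using xs(1) by simp
      also have "\<dots> = g \<otimes> (x \<otimes> y)" using xc(1,2) that by (simp add: m_assoc)
      finally show ?thesis .
    qed
    have "(x \<otimes> y) [^] n = x [^] n \<otimes> y [^] n" using pow_mult_distrib[OF xyc xc(1,2)] .
    then have "(x \<otimes> y) [^] n = \<one>" using xc by simp
    then show "x \<otimes> y \<in> Z" unfolding Z_def using xc(1,2) c by blast
  next
    fix x assume x: "x \<in> Z"
    have xc: "x \<in> carrier G" "x [^] n = \<one>" using x unfolding Z_def by blast+
    have c: "inv x \<otimes> g = g \<otimes> inv x" if "g \<in> carrier G" for g
    proof -
      have "x \<otimes> inv g = inv g \<otimes> x" using x that unfolding Z_def by blast
      then have "inv (x \<otimes> inv g) = inv (inv g \<otimes> x)" by simp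
      then show ?thesis using xc that by (simp add: inv_mult_group)
    qed
    have "inv x [^] n = \<one>" using xc by (simp add: nat_pow_inv)
    then show "inv x \<in> Z" unfolding Z_def using xc c by blast
  qed
  then show ?thesis unfolding Z_def .
qed

lemma conj_eq_comm:
  fixes G :: "('a,'b) monoid_scheme" (structure)
  assumes G: "group G" and c: "h \<in> carrier G" "h' \<in> carrier G" "x \<in> carrier G"
    and eq: "h \<otimes> x \<otimes> inv h = h' \<otimes> x \<otimes> inv h'"
  shows "inv h \<otimes> h' \<otimes> x = x \<otimes> (inv h \<otimes> h')"
proof -
  interpret group G by fact
  have "inv h \<otimes> (h \<otimes> x \<otimes> inv h) \<otimes> h' = inv h \<otimes> (h' \<otimes> x \<otimes> inv h') \<otimes> h'"
    by (simp only: eq)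
  moreover have "inv h \<otimes> (h \<otimes> x \<otimes> inv h) \<otimes> h' = x \<otimes> (inv h \<otimes> h')"
    using c by (simp add: m_assoc[symmetric])
  moreover have "inv h \<otimes> (h' \<otimes> x \<otimes> inv h') \<otimes> h' = inv h \<otimes> h' \<otimes> x"
    using c by (simp add: m_assoc)
  ultimately show ?thesis by simp
qed

lemma comm_commutator:
  fixes G :: "('a,'b) monoid_scheme" (structure)
  assumes G: "comm_group G" and c: "a \<in> carrier G" "b \<in> carrier G"
  shows "a \<otimes> b \<otimes> inv a \<otimes> inv b = \<one>"
proof -
  interpret comm_group G by fact
  have "a \<otimes> b \<otimes> inv a = a \<otimes> (inv a \<otimes> b)" using c by (simp add: m_assoc m_comm[of b "inv a"])
  also have "\<dots> = b" using c by (simp add: m_assoc[symmetric])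
  finally show ?thesis using c by simp
qed

lemma pgroup_order:
  fixes G :: "('a,'b) monoid_scheme" (structure)
  assumes G: "group G" and fin: "finite (carrier G)" and p: "Factorial_Ring.prime (p::nat)"
    and all: "\<And>x. x \<in> carrier G \<Longrightarrow> x [^] (p ^ k) = \<one>"
  shows "order G = p ^ multiplicity p (order G)"
proof -
  obtain y where y: "order G = p ^ multiplicity p (order G) * y" "\<not> p dvd y"
  proof (rule multiplicity_decompose')
    show "order G \<noteq> 0" using fin monoid.one_closed[OF group.is_monoid[OF G]] unfolding order_def by (metis card_0_eq empty_iff)
    show "\<not> is_unit p" using prime_gt_1_nat[OF p] by simp
  qed
  have "y = 1"
  proof (rule ccontr)
    assume "y \<noteq> 1"
    then obtain q where q: "Factorial_Ring.prime q" "q dvd y" using prime_factor_nat by blast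
    have "q dvd order G" using q(2) y(1) by (metis dvd_mult)
    then have "q dvd p ^ k" using cauchy_like[OF G fin q(1)] all by blast
    then have "q dvd p" using q(1) prime_dvd_power by blast
    then have "q = p" using primes_dvd_imp_eq[OF q(1) p] by blast
    then show False using q(2) y(2) by simp
  qed
  then show ?thesis using y(1) by simp
qed



theorem lemma2p9:
  fixes p r s :: nat and B e :: real
    and F :: "('a, 'm1) monoid_scheme"
    and H :: "('b, 'm2) monoid_scheme"
    and Hbar :: "('c, 'm3) monoid_scheme"
    and i :: "'a \<Rightarrow> 'b" and \<pi> :: "'b \<Rightarrow> 'c"
  assumes "Factorial_Ring.prime p"
    and "group F" and "group H" and "comm_group Hbar"
    and "finite (carrier F)" and "finite (carrier H)" and "finite (carrier Hbar)"
    and "i \<in> mon F H" and "\<pi> \<in> epi H Hbar"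
    and "i ` carrier F = kernel H Hbar \<pi>"
    and "generated_by_at_most Hbar r"
    and "B > 0" and "e > 0"
    and "\<And>Fp. sylow_subgroup p F Fp \<Longrightarrow> real (order F) \<le> B * real (card Fp) powr e"
    and "generated_by_at_most F s"
  shows "\<exists>A. characteristic_subgroup A H
            \<and> (\<forall>x\<in>A. \<forall>y\<in>A. x \<otimes>\<^bsub>H\<^esub> y = y \<otimes>\<^bsub>H\<^esub> x)
            \<and> coprime (card A) p
            \<and> (\<forall>Hp. sylow_subgroup p H Hp \<longrightarrow>
                 real (card (rcosets\<^bsub>H\<^esub> A)) \<le> B ^ (r + s) * real (card Hp) powr (e * real (r + s) + 1))"
proof -
  note assms' = assms
  interpret H: group H by fact
  interpret F: group F by fact
  interpret Hb: comm_group Hbar by fact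
  have pihom: "\<pi> \<in> hom H Hbar" and pisurj: "\<pi> ` carrier H = carrier Hbar"
    using assms(9) unfolding epi_def by auto
  have ihom: "i \<in> hom F H" and iinj: "inj_on i (carrier F)"
    using assms(8) unfolding mon_def by auto
  interpret pi: group_hom H Hbar \<pi>
    by (simp add: group_hom_def group_hom_axioms_def pihom H.group_axioms Hb.group_axioms)
  interpret ii: group_hom F H i
    by (simp add: group_hom_def group_hom_axioms_def ihom H.group_axioms F.group_axioms)
  have p: "Factorial_Ring.prime p" by fact
  have p2: "p \<ge> 2" using p prime_ge_2_nat by blast
  define N where "N = kernel H Hbar \<pi>"
  have Nsub: "subgroup N H" unfolding N_def by (rule pi.subgroup_kernel)
  have cardN: "card N = order F"
    unfolding order_def N_def using card_image[OF iinj] assms(10) by simp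
  have finH: "finite (carrier H)" by fact
  have ordH0: "order H > 0" using finH unfolding order_def using H.one_closed by (auto simp add: card_gt_0_iff)
  define k where "k = multiplicity p (order H)"
  define m where "m = order H div p ^ k"
  have ordH: "order H = p ^ k * m" unfolding m_def k_def by (simp add: multiplicity_dvd)
  have pm: "\<not> p dvd m" unfolding m_def k_def
    by (rule multiplicity_decompose) (use ordH0 p in auto)
  define Zc where "Zc = {z \<in> carrier H. \<forall>g\<in>carrier H. z \<otimes>\<^bsub>H\<^esub> g = g \<otimes>\<^bsub>H\<^esub> z}"
  define A where "A = {z \<in> carrier H. (\<forall>g\<in>carrier H. z \<otimes>\<^bsub>H\<^esub> g = g \<otimes>\<^bsub>H\<^esub> z) \<and> z [^]\<^bsub>H\<^esub> m = \<one>\<^bsub>H\<^esub>}"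
  define Bs where "Bs = {z \<in> carrier H. (\<forall>g\<in>carrier H. z \<otimes>\<^bsub>H\<^esub> g = g \<otimes>\<^bsub>H\<^esub> z) \<and> z [^]\<^bsub>H\<^esub> (p ^ k) = \<one>\<^bsub>H\<^esub>}"
  have Asub: "subgroup A H" unfolding A_def by (rule center_pow_subgroup[OF assms(3)])
  have Bsub: "subgroup Bs H" unfolding Bs_def by (rule center_pow_subgroup[OF assms(3)])
  have finA: "finite A" using finH Asub subgroup.subset finite_subset by metis
  have finB: "finite Bs" using finH Bsub subgroup.subset finite_subset by metis
  have finZ: "finite Zc" using finH unfolding Zc_def by simp
  have cardA0: "card A > 0" using finA Asub subgroup.one_closed by (metis card_gt_0_iff empty_iff)
  obtain S0 where S0: "S0 \<subseteq> carrier Hbar" "finite S0" "card S0 \<le> r" "generate Hbar S0 = carrier Hbar"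
    using assms(11) unfolding generated_by_at_most_def by blast
  obtain S1 where S1: "S1 \<subseteq> carrier F" "finite S1" "card S1 \<le> s" "generate F S1 = carrier F"
    using assms(15) unfolding generated_by_at_most_def by blast
  define lift where "lift y = (SOME h. h \<in> carrier H \<and> \<pi> h = y)" for y
  have lift: "lift y \<in> carrier H \<and> \<pi> (lift y) = y" if "y \<in> carrier Hbar" for y
  proof -
    have "\<exists>h. h \<in> carrier H \<and> \<pi> h = y" using that pisurj by (metis imageE)
    then show ?thesis unfolding lift_def by (rule someI_ex)
  qed
  define T where "T = lift ` S0"
  define Xg where "Xg = T \<union> i ` S1"
  have TH: "T \<subseteq> carrier H" unfolding T_def using lift S0(1) by auto
  have XH: "Xg \<subseteq> carrier H" unfolding Xg_def using TH S1(1) ii.hom_closed by blast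
  have finX: "finite Xg" unfolding Xg_def T_def using S0 S1 by auto
  have cardX: "card Xg \<le> r + s"
  proof -
    have "card Xg \<le> card T + card (i ` S1)" unfolding Xg_def by (rule card_Un_le)
    also have "\<dots> \<le> card S0 + card S1" unfolding T_def by (intro add_mono card_image_le S0 S1)
    finally show ?thesis using S0 S1 by linarith
  qed
  have piT: "\<pi> ` T = S0"
  proof -
    have "\<pi> ` T = (\<lambda>y. \<pi> (lift y)) ` S0" unfolding T_def by (rule image_image)
    also have "\<dots> = (\<lambda>y. y) ` S0"
      by (rule image_cong[OF refl]) (use lift S0(1) in \<open>simp add: subset_iff\<close>)
    finally show ?thesis by simp
  qed
  have gen: "carrier H \<subseteq> generate H Xg"
  proof
    fix y assume y: "y \<in> carrier H"
    define K where "K = generate H Xg"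
    have Ksub: "subgroup K H" unfolding K_def by (rule H.generate_is_subgroup[OF XH])
    have NK: "N \<subseteq> K"
    proof -
      have "N = i ` generate F S1" unfolding N_def S1(4) using assms(10) by (rule sym)
      also have "\<dots> = generate H (i ` S1)" using ii.generate_img[OF S1(1)] by (rule sym)
      also have "\<dots> \<subseteq> K" unfolding K_def Xg_def by (rule H.mono_generate) (rule Un_upper2)
      finally show ?thesis .
    qed
    have "\<pi> y \<in> carrier Hbar" using y by simp
    then have "\<pi> y \<in> generate Hbar (\<pi> ` T)" unfolding piT S0(4) .
    then have "\<pi> y \<in> \<pi> ` generate H T" unfolding pi.generate_img[OF TH] .
    then obtain k where k: "k \<in> generate H T" "\<pi> y = \<pi> k" by (rule imageE) (rule that)
    have "generate H T \<subseteq> K" unfolding K_def Xg_def by (rule H.mono_generate) (rule Un_upper1)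
    then have kK: "k \<in> K" using k(1) by (rule subsetD)
    have kH: "k \<in> carrier H" using kK subgroup.mem_carrier[OF Ksub] by simp
    have "y \<otimes>\<^bsub>H\<^esub> inv\<^bsub>H\<^esub> k \<in> N"
    proof -
      have "\<pi> (y \<otimes>\<^bsub>H\<^esub> inv\<^bsub>H\<^esub> k) = \<pi> y \<otimes>\<^bsub>Hbar\<^esub> inv\<^bsub>Hbar\<^esub> \<pi> k" using y kH by simp
      also have "\<dots> = \<one>\<^bsub>Hbar\<^esub>" unfolding k(2) using kH by simp
      finally show ?thesis unfolding N_def kernel_def using y kH by simp
    qed
    then have "(y \<otimes>\<^bsub>H\<^esub> inv\<^bsub>H\<^esub> k) \<otimes>\<^bsub>H\<^esub> k \<in> K"
      using subgroup.m_closed[OF Ksub] NK kK by (meson subsetD)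
    moreover have "(y \<otimes>\<^bsub>H\<^esub> inv\<^bsub>H\<^esub> k) \<otimes>\<^bsub>H\<^esub> k = y" using y kH by (simp add: H.m_assoc)
    ultimately show "y \<in> generate H Xg" unfolding K_def by simp
  qed
  have inZ: "c \<in> Zc" if c: "c \<in> carrier H" "\<And>x. x \<in> Xg \<Longrightarrow> c \<otimes>\<^bsub>H\<^esub> x = x \<otimes>\<^bsub>H\<^esub> c" for c
  proof -
    have "generate H Xg \<subseteq> {g \<in> carrier H. c \<otimes>\<^bsub>H\<^esub> g = g \<otimes>\<^bsub>H\<^esub> c}"
    proof (rule H.generate_subgroup_incl[OF _ centralizer_subgroup[OF assms(3) c(1)]])
      show "Xg \<subseteq> {g \<in> carrier H. c \<otimes>\<^bsub>H\<^esub> g = g \<otimes>\<^bsub>H\<^esub> c}"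
      proof
        fix x assume x: "x \<in> Xg"
        have "x \<in> carrier H" using XH x by (rule subsetD)
        then show "x \<in> {g \<in> carrier H. c \<otimes>\<^bsub>H\<^esub> g = g \<otimes>\<^bsub>H\<^esub> c}"
          using c(2)[OF x] by (intro CollectI conjI)
      qed
    qed
    then have "carrier H \<subseteq> {g \<in> carrier H. c \<otimes>\<^bsub>H\<^esub> g = g \<otimes>\<^bsub>H\<^esub> c}" using gen by (rule subset_trans[rotated])
    then have "\<forall>g\<in>carrier H. c \<otimes>\<^bsub>H\<^esub> g = g \<otimes>\<^bsub>H\<^esub> c" by (simp add: subset_iff)
    then show ?thesis using c(1) unfolding Zc_def by simp
  qed
  define phi where "phi h = (\<lambda>x\<in>Xg. h \<otimes>\<^bsub>H\<^esub> x \<otimes>\<^bsub>H\<^esub> inv\<^bsub>H\<^esub> h)" for h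
  have fib: "inv\<^bsub>H\<^esub> h \<otimes>\<^bsub>H\<^esub> h' \<in> Zc"
    if h: "h \<in> carrier H" "h' \<in> carrier H" "phi h = phi h'" for h h'
  proof (rule inZ)
    show "inv\<^bsub>H\<^esub> h \<otimes>\<^bsub>H\<^esub> h' \<in> carrier H" using h by simp
  next
    fix x assume x: "x \<in> Xg"
    have xH: "x \<in> carrier H" using XH x by (rule subsetD)
    have "phi h x = phi h' x" using h(3) by simp
    then have "h \<otimes>\<^bsub>H\<^esub> x \<otimes>\<^bsub>H\<^esub> inv\<^bsub>H\<^esub> h = h' \<otimes>\<^bsub>H\<^esub> x \<otimes>\<^bsub>H\<^esub> inv\<^bsub>H\<^esub> h'"
      unfolding phi_def using x by simp
    then show "inv\<^bsub>H\<^esub> h \<otimes>\<^bsub>H\<^esub> h' \<otimes>\<^bsub>H\<^esub> x = x \<otimes>\<^bsub>H\<^esub> (inv\<^bsub>H\<^esub> h \<otimes>\<^bsub>H\<^esub> h')"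
      by (rule conj_eq_comm[OF assms(3) h(1,2) xH])
  qed
  have NH: "N \<subseteq> carrier H" using Nsub by (rule subgroup.subset)
  have phiim: "phi ` carrier H \<subseteq> PiE Xg (\<lambda>x. N #>\<^bsub>H\<^esub> x)"
  proof
    fix v assume "v \<in> phi ` carrier H"
    then obtain h where h: "h \<in> carrier H" "v = phi h" by (rule imageE) (rule that)
    have "phi h \<in> PiE Xg (\<lambda>x. N #>\<^bsub>H\<^esub> x)"
      unfolding phi_def
    proof (rule iffD2[OF restrict_PiE_iff], rule ballI)
      fix x assume x: "x \<in> Xg"
      have xH: "x \<in> carrier H" using XH x by (rule subsetD)
      define n where "n = h \<otimes>\<^bsub>H\<^esub> x \<otimes>\<^bsub>H\<^esub> inv\<^bsub>H\<^esub> h \<otimes>\<^bsub>H\<^esub> inv\<^bsub>H\<^esub> x"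
      have nH: "n \<in> carrier H" unfolding n_def using h xH by simp
      have "\<pi> n = \<pi> h \<otimes>\<^bsub>Hbar\<^esub> \<pi> x \<otimes>\<^bsub>Hbar\<^esub> inv\<^bsub>Hbar\<^esub> \<pi> h \<otimes>\<^bsub>Hbar\<^esub> inv\<^bsub>Hbar\<^esub> \<pi> x"
        unfolding n_def using h xH by simp
      also have "\<dots> = \<one>\<^bsub>Hbar\<^esub>" by (rule comm_commutator[OF assms(4)]) (use h xH in simp_all)
      finally have "n \<in> N" unfolding N_def kernel_def using nH by simp
      then have "n \<otimes>\<^bsub>H\<^esub> x \<in> N #>\<^bsub>H\<^esub> x" using NH xH by (rule H.rcosI)
      moreover have "n \<otimes>\<^bsub>H\<^esub> x = h \<otimes>\<^bsub>H\<^esub> x \<otimes>\<^bsub>H\<^esub> inv\<^bsub>H\<^esub> h"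
        unfolding n_def using h xH by (simp add: H.m_assoc)
      ultimately show "h \<otimes>\<^bsub>H\<^esub> x \<otimes>\<^bsub>H\<^esub> inv\<^bsub>H\<^esub> h \<in> N #>\<^bsub>H\<^esub> x" by simp
    qed
    then show "v \<in> PiE Xg (\<lambda>x. N #>\<^bsub>H\<^esub> x)" using h(2) by simp
  qed
  have finN: "finite N" using finH NH by (rule finite_subset[rotated])
  have cardPi: "card (PiE Xg (\<lambda>x. N #>\<^bsub>H\<^esub> x)) = card N ^ card Xg"
  proof -
    have "card (PiE Xg (\<lambda>x. N #>\<^bsub>H\<^esub> x)) = (\<Prod>x\<in>Xg. card (N #>\<^bsub>H\<^esub> x))"
      using finX by (rule card_PiE)
    also have "\<dots> = (\<Prod>x\<in>Xg. card N)"
    proof (rule prod.cong[OF refl])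
      fix x assume x: "x \<in> Xg"
      have xH: "x \<in> carrier H" using XH x by (rule subsetD)
      show "card (N #>\<^bsub>H\<^esub> x) = card N"
        using H.card_rcosets_equal[OF H.rcosetsI[OF NH xH] NH] by (rule sym)
    qed
    finally show ?thesis by simp
  qed
  have finPi: "finite (PiE Xg (\<lambda>x. N #>\<^bsub>H\<^esub> x))"
    by (rule finite_PiE[OF finX]) (rule finite_subset[OF H.r_coset_subset_G[OF NH] finH], use XH in \<open>rule subsetD\<close>)
  have cardH1: "order H \<le> card N ^ card Xg * card Zc"
  proof -
    have "order H \<le> card (phi ` carrier H) * card Zc"
      unfolding order_def by (rule fiber_card[OF assms(3) subset_refl finZ fib]) auto
    also have "\<dots> \<le> card N ^ card Xg * card Zc"
      using card_mono[OF finPi phiim] cardPi by simp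
    finally show ?thesis .
  qed
  have ZcA: "Zc = {z \<in> carrier H. (\<forall>g\<in>carrier H. z \<otimes>\<^bsub>H\<^esub> g = g \<otimes>\<^bsub>H\<^esub> z) \<and> z [^]\<^bsub>H\<^esub> (0::nat) = \<one>\<^bsub>H\<^esub>}"
    unfolding Zc_def by simp
  have Zsub: "subgroup Zc H" unfolding ZcA by (rule center_pow_subgroup[OF assms(3)])
  have ZcI: "z \<in> carrier H \<Longrightarrow> (\<And>g. g \<in> carrier H \<Longrightarrow> z \<otimes>\<^bsub>H\<^esub> g = g \<otimes>\<^bsub>H\<^esub> z) \<Longrightarrow> z \<in> Zc" for z
    unfolding Zc_def by blast
  have ZcD: "z \<in> Zc \<Longrightarrow> g \<in> carrier H \<Longrightarrow> z \<otimes>\<^bsub>H\<^esub> g = g \<otimes>\<^bsub>H\<^esub> z" for z g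
    unfolding Zc_def by blast
  have ZcH: "z \<in> Zc \<Longrightarrow> z \<in> carrier H" for z unfolding Zc_def by blast
  have AZ: "A \<subseteq> Zc" unfolding A_def Zc_def by blast
  have BZ: "Bs \<subseteq> Zc" unfolding Bs_def Zc_def by blast
  have cardZ: "card Zc \<le> card ((\<lambda>z. z [^]\<^bsub>H\<^esub> m) ` Zc) * card A"
  proof (rule fiber_card[OF assms(3) _ finA])
    show "Zc \<subseteq> carrier H" using Zsub by (rule subgroup.subset)
  next
    fix x y assume x: "x \<in> Zc" and y: "y \<in> Zc" and eq: "x [^]\<^bsub>H\<^esub> m = y [^]\<^bsub>H\<^esub> m"
    have xH: "x \<in> carrier H" and yH: "y \<in> carrier H" using x y by (simp_all add: ZcH)
    have iZ: "inv\<^bsub>H\<^esub> x \<otimes>\<^bsub>H\<^esub> y \<in> Zc"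
      using Zsub x y by (simp add: subgroup.m_closed subgroup.m_inv_closed)
    have c: "inv\<^bsub>H\<^esub> x \<otimes>\<^bsub>H\<^esub> y = y \<otimes>\<^bsub>H\<^esub> inv\<^bsub>H\<^esub> x"
      using ZcD[OF y, of "inv\<^bsub>H\<^esub> x"] xH by simp
    have "(inv\<^bsub>H\<^esub> x \<otimes>\<^bsub>H\<^esub> y) [^]\<^bsub>H\<^esub> m = (inv\<^bsub>H\<^esub> x) [^]\<^bsub>H\<^esub> m \<otimes>\<^bsub>H\<^esub> y [^]\<^bsub>H\<^esub> m"
      using H.pow_mult_distrib[OF c] xH yH by simp
    also have "\<dots> = inv\<^bsub>H\<^esub> (y [^]\<^bsub>H\<^esub> m) \<otimes>\<^bsub>H\<^esub> y [^]\<^bsub>H\<^esub> m"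
      using xH by (simp add: H.nat_pow_inv eq)
    also have "\<dots> = \<one>\<^bsub>H\<^esub>" using yH by simp
    finally show "inv\<^bsub>H\<^esub> x \<otimes>\<^bsub>H\<^esub> y \<in> A"
      using iZ unfolding A_def Zc_def by blast
  qed
  have imB: "(\<lambda>z. z [^]\<^bsub>H\<^esub> m) ` Zc \<subseteq> Bs"
  proof
    fix w assume "w \<in> (\<lambda>z. z [^]\<^bsub>H\<^esub> m) ` Zc"
    then obtain z where z: "z \<in> Zc" "w = z [^]\<^bsub>H\<^esub> m" by (rule imageE) (rule that)
    have zH: "z \<in> carrier H" using z(1) by (rule ZcH)
    have wZ: "w \<in> Zc" unfolding z(2)
    proof (rule ZcI)
      show "z [^]\<^bsub>H\<^esub> m \<in> carrier H" using zH by simp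
      fix g assume g: "g \<in> carrier H"
      show "z [^]\<^bsub>H\<^esub> m \<otimes>\<^bsub>H\<^esub> g = g \<otimes>\<^bsub>H\<^esub> z [^]\<^bsub>H\<^esub> m"
        by (rule H.group_commutes_pow[OF ZcD[OF z(1) g] zH g])
    qed
    have "w [^]\<^bsub>H\<^esub> (p ^ k) = z [^]\<^bsub>H\<^esub> (m * p ^ k)" unfolding z(2) using zH by (simp add: H.nat_pow_pow)
    also have "\<dots> = z [^]\<^bsub>H\<^esub> order H" using ordH by (simp add: mult.commute)
    also have "\<dots> = \<one>\<^bsub>H\<^esub>" using zH by (rule H.pow_order_eq_1)
    finally show "w \<in> Bs" using wZ unfolding Bs_def Zc_def by blast
  qed
  have cardZ2: "card Zc \<le> card A * card Bs"
  proof -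
    have "card ((\<lambda>z. z [^]\<^bsub>H\<^esub> m) ` Zc) \<le> card Bs" using finB imB by (rule card_mono)
    then show ?thesis using cardZ by (metis mult.commute mult_le_mono1 order_trans)
  qed
  interpret GB: group "H\<lparr>carrier := Bs\<rparr>" by (rule H.subgroup_imp_group[OF Bsub])
  have cardBs: "card Bs = p ^ multiplicity p (card Bs)"
  proof -
    have "order (H\<lparr>carrier := Bs\<rparr>) = p ^ multiplicity p (order (H\<lparr>carrier := Bs\<rparr>))"
    proof (rule pgroup_order[OF GB.group_axioms _ p])
      show "finite (carrier (H\<lparr>carrier := Bs\<rparr>))" using finB by simp
    next
      fix x assume "x \<in> carrier (H\<lparr>carrier := Bs\<rparr>)"
      then have "x \<in> Bs" by simp
      then have "x [^]\<^bsub>H\<^esub> (p ^ k) = \<one>\<^bsub>H\<^esub>" unfolding Bs_def by blast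
      then show "x [^]\<^bsub>H\<lparr>carrier := Bs\<rparr>\<^esub> (p ^ k) = \<one>\<^bsub>H\<lparr>carrier := Bs\<rparr>\<^esub>"
        using H.nat_pow_consistent[of x "p ^ k" Bs] by simp
    qed
    then show ?thesis unfolding order_def by simp
  qed
  have BsdvdH: "card Bs dvd order H"
    using H.lagrange[OF Bsub] by (metis dvd_triv_right)
  have cardBsle: "card Bs \<le> p ^ k"
  proof -
    have "multiplicity p (card Bs) = multiplicity p (p ^ multiplicity p (card Bs))"
      using p by (simp add: prime_imp_prime_elem)
    also have "\<dots> \<le> k" unfolding k_def
      by (rule dvd_imp_multiplicity_le) (use BsdvdH cardBs ordH0 in auto)
    finally have "multiplicity p (card Bs) \<le> k" .
    then have "p ^ multiplicity p (card Bs) \<le> p ^ k" using p2 by (simp add: power_increasing)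
    then show ?thesis using cardBs by simp
  qed
  interpret GA: group "H\<lparr>carrier := A\<rparr>" by (rule H.subgroup_imp_group[OF Asub])
  have copA: "coprime (card A) p"
  proof -
    have "\<not> p dvd card A"
    proof
      assume pd: "p dvd card A"
      have "p dvd m"
      proof (rule cauchy_like[OF GA.group_axioms _ p])
        show "finite (carrier (H\<lparr>carrier := A\<rparr>))" using finA by simp
        show "p dvd order (H\<lparr>carrier := A\<rparr>)" using pd unfolding order_def by simp
      next
        fix x assume "x \<in> carrier (H\<lparr>carrier := A\<rparr>)"
        then have "x \<in> A" by simp
        then have "x [^]\<^bsub>H\<^esub> m = \<one>\<^bsub>H\<^esub>" unfolding A_def by blast
        then show "x [^]\<^bsub>H\<lparr>carrier := A\<rparr>\<^esub> m = \<one>\<^bsub>H\<lparr>carrier := A\<rparr>\<^esub>"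
          using H.nat_pow_consistent[of x m A] by simp
      qed
      then show False using pm by simp
    qed
    then have "coprime p (card A)" using p by (simp add: prime_imp_coprime)
    then show ?thesis by (simp add: coprime_commute)
  qed
  have char: "characteristic_subgroup A H"
    unfolding characteristic_subgroup_def
  proof (intro conjI ballI)
    show "subgroup A H" by (rule Asub)
  next
    fix f assume f: "f \<in> iso H H"
    have fhom: "f \<in> hom H H" and fbij: "bij_betw f (carrier H) (carrier H)"
      using f unfolding iso_def by auto
    interpret fh: group_hom H H f
      by (simp add: group_hom_def group_hom_axioms_def fhom H.group_axioms)
    have fsurj: "f ` carrier H = carrier H" using fbij by (rule bij_betw_imp_surj_on)
    have finj: "inj_on f (carrier H)" using fbij by (rule bij_betw_imp_inj_on)
    have AH: "A \<subseteq> carrier H" using Asub by (rule subgroup.subset)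
    have sub: "f ` A \<subseteq> A"
    proof
      fix w assume "w \<in> f ` A"
      then obtain z where z: "z \<in> A" "w = f z" by (rule imageE) (rule that)
      have zH: "z \<in> carrier H" using AH z(1) by (rule subsetD)
      have zc: "z \<otimes>\<^bsub>H\<^esub> g = g \<otimes>\<^bsub>H\<^esub> z" if "g \<in> carrier H" for g
        using z(1) that unfolding A_def by blast
      have zm: "z [^]\<^bsub>H\<^esub> m = \<one>\<^bsub>H\<^esub>" using z(1) unfolding A_def by blast
      have wH: "w \<in> carrier H" unfolding z(2) using zH by simp
      have wc: "w \<otimes>\<^bsub>H\<^esub> g = g \<otimes>\<^bsub>H\<^esub> w" if g: "g \<in> carrier H" for g
      proof -
        obtain g' where g': "g' \<in> carrier H" "g = f g'" using g fsurj by (metis imageE)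
        have "w \<otimes>\<^bsub>H\<^esub> g = f (z \<otimes>\<^bsub>H\<^esub> g')" unfolding z(2) g'(2) using zH g'(1) by simp
        also have "\<dots> = f (g' \<otimes>\<^bsub>H\<^esub> z)" using zc[OF g'(1)] by simp
        also have "\<dots> = g \<otimes>\<^bsub>H\<^esub> w" unfolding z(2) g'(2) using zH g'(1) by simp
        finally show ?thesis .
      qed
      have "w [^]\<^bsub>H\<^esub> m = f (z [^]\<^bsub>H\<^esub> m)" unfolding z(2) using zH by (simp add: fh.hom_nat_pow)
      also have "\<dots> = \<one>\<^bsub>H\<^esub>" using zm by simp
      finally show "w \<in> A" using wH wc unfolding A_def by blast
    qed
    have "card (f ` A) = card A" using inj_on_subset[OF finj AH] by (rule card_image)
    then show "f ` A = A" using card_subset_eq[OF finA sub] by simp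
  qed
  have abel: "\<forall>x\<in>A. \<forall>y\<in>A. x \<otimes>\<^bsub>H\<^esub> y = y \<otimes>\<^bsub>H\<^esub> x"
  proof (intro ballI)
    fix x y assume "x \<in> A" "y \<in> A"
    then show "x \<otimes>\<^bsub>H\<^esub> y = y \<otimes>\<^bsub>H\<^esub> x" unfolding A_def by blast
  qed
  define kF where "kF = multiplicity p (order F)"
  have ordF: "order F = p ^ kF * (order F div p ^ kF)" unfolding kF_def by (simp add: multiplicity_dvd)
  obtain Fp where Fp: "subgroup Fp F" "card Fp = p ^ kF"
    using sylow_thm[OF p assms(2) ordF assms(5)] by blast
  have Fpsyl: "sylow_subgroup p F Fp" unfolding sylow_subgroup_def kF_def[symmetric] using Fp by simp
  have hypF: "real (order F) \<le> B * real (p ^ kF) powr e" using assms(14)[OF Fpsyl] Fp(2) by simp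
  have kFk: "kF \<le> k"
  proof -
    have "card N dvd order H" using H.lagrange[OF Nsub] by (metis dvd_triv_right)
    then have "order F dvd order H" using cardN by simp
    then show ?thesis unfolding kF_def k_def by (rule dvd_imp_multiplicity_le) (use ordH0 in simp)
  qed
  have cardN1: "card N \<ge> 1" using finN Nsub subgroup.one_closed by (metis card_0_eq empty_iff less_one not_less)
  have rcA: "card (rcosets\<^bsub>H\<^esub> A) \<le> card N ^ (r + s) * p ^ k"
  proof -
    have "card (rcosets\<^bsub>H\<^esub> A) * card A = order H" using H.lagrange[OF Asub] .
    also have "\<dots> \<le> card N ^ card Xg * card Zc" by (rule cardH1)
    also have "\<dots> \<le> card N ^ card Xg * (card A * card Bs)" using cardZ2 by simp
    also have "\<dots> \<le> card N ^ (r + s) * (card A * p ^ k)"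
      by (intro mult_le_mono power_increasing cardX cardN1 cardBsle order_refl)
    also have "\<dots> = (card N ^ (r + s) * p ^ k) * card A" by simp
    finally show ?thesis using cardA0 by simp
  qed
  have final: "real (card (rcosets\<^bsub>H\<^esub> A)) \<le> B ^ (r + s) * real (p ^ k) powr (e * real (r + s) + 1)"
  proof -
    define P where "P = real (p ^ k)"
    have P1: "P \<ge> 1" unfolding P_def using p2 by simp
    have "real (card N) \<le> B * real (p ^ kF) powr e" using hypF cardN by simp
    also have "\<dots> \<le> B * P powr e"
    proof -
      have "real (p ^ kF) \<le> P" unfolding P_def using p2 kFk by (simp add: power_increasing)
      then have "real (p ^ kF) powr e \<le> P powr e" using assms(13) by (intro powr_mono2) auto
      then show ?thesis using assms(12) by simp
    qed
    finally have cN: "real (card N) \<le> B * P powr e" .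
    have "real (card (rcosets\<^bsub>H\<^esub> A)) \<le> real (card N) ^ (r + s) * P"
      using rcA unfolding P_def by (metis of_nat_le_iff of_nat_mult of_nat_power)
    also have "\<dots> \<le> (B * P powr e) ^ (r + s) * P"
      using cN P1 by (intro mult_right_mono power_mono) auto
    also have "\<dots> = B ^ (r + s) * (P powr (real (r + s) * e) * P powr 1)"
      using P1 by (simp add: power_mult_distrib powr_power)
    also have "\<dots> = B ^ (r + s) * P powr (e * real (r + s) + 1)"
    proof -
      have "P powr (e * real (r + s) + 1) = P powr (e * real (r + s)) * P powr 1" by (rule powr_add)
      then show ?thesis by (simp only: mult.commute[of e])
    qed
    finally show ?thesis unfolding P_def .
  qed
  show ?thesis
  proof (intro exI conjI allI impI)
    show "characteristic_subgroup A H" by (rule char)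
    show "\<forall>x\<in>A. \<forall>y\<in>A. x \<otimes>\<^bsub>H\<^esub> y = y \<otimes>\<^bsub>H\<^esub> x" by (rule abel)
    show "coprime (card A) p" by (rule copA)
  next
    fix Hp assume "sylow_subgroup p H Hp"
    then have "card Hp = p ^ k" unfolding sylow_subgroup_def k_def by simp
    then show "real (card (rcosets\<^bsub>H\<^esub> A)) \<le> B ^ (r + s) * real (card Hp) powr (e * real (r + s) + 1)"
      using final by simp
  qed
qed

end
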